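(* Let $X\subset\mathbb C^s$ be a finite nonempty set and let $A\subset\Gamma=\mathbb N_0^s$ be a finite set such that $\Pi_A$ is a degree reducing interpolation space for $X$. Let $L_A:\Pi\to\Pi_A$ be the interpolation operator, i.e. $L_Ap$ is the unique element of $\Pi_A$ with $(L_Ap)(x)=p(x)$ for all $x\in X$. Then the polynomials \[ q_\alpha(x):=x^\alpha-(L_A(\cdot)^\alpha)(x),\qquad \alpha\in\partial A, \] form an H-basis of the ideal $I_X=\{p\in\Pi:p(x)=0\ \forall x\in X\}$.
   Context: $\Pi=\mathbb C[x_1,\dots,x_s]$, $\deg$ is total degree with $\deg 0<0$. For $A\subset\Gamma$, $\Pi_A$ is the span of $x^\alpha$, $\alpha\in A$. A subspace $\mathcal P\subseteq\Pi$ is a degree reducing interpolation space for $X$ if for every $q\in\Pi$ there is exactly one $p\in\mathcal P$ with $p(x)=q(x)$ for all $x\in X$, and this $p$ satisfies $\deg p\le\deg q$. The border of a finite $A\subset\Gamma$ is $\partial A=\big(\bigcup_{j=1}^s(A+\epsilon_j)\big)\setminus A$, where $\epsilon_j$ is the $j$-th unit multiindex. A finite set $H\subset I$ of an ideal $I\subseteq\Pi$ is an H-basis of $I$ if every $q\in I$ can be written as $q=\sum_{h\in H}g_h h$ with $g_h\in\Pi$ and $\deg g_h+\deg h\le\deg q$ for all $h$ (terms with $g_h=0$ being allowed). *)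

theory Defs
  imports Complex_Main "HOL-Library.Poly_Mapping"
begin

text \<open>Multivariate polynomials over the complex numbers in s = CARD('n) variables,
  represented as finitely supported maps from multiindices to coefficients.
  Multiplication is the convolution product of Poly_Mapping.\<close>

type_synonym 'n mpoly = "('n \<Rightarrow>\<^sub>0 nat) \<Rightarrow>\<^sub>0 complex"

definition monom :: "('n \<Rightarrow>\<^sub>0 nat) \<Rightarrow> 'n mpoly" where
  "monom \<alpha> = Poly_Mapping.single \<alpha> 1"

definition eval :: "('n::finite) mpoly \<Rightarrow> ('n \<Rightarrow> complex) \<Rightarrow> complex" where
  "eval p x = (\<Sum>a\<in>Poly_Mapping.keys p. Poly_Mapping.lookup p a * (\<Prod>i\<in>UNIV. x i ^ Poly_Mapping.lookup (a::'n \<Rightarrow>\<^sub>0 nat) i))"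

definition mdeg :: "('n::finite \<Rightarrow>\<^sub>0 nat) \<Rightarrow> nat" where
  "mdeg \<alpha> = (\<Sum>i\<in>UNIV. Poly_Mapping.lookup \<alpha> i)"

definition deg :: "('n::finite) mpoly \<Rightarrow> int" where
  "deg p = (if p = 0 then -1 else int (Max (mdeg ` Poly_Mapping.keys p)))"

definition span_mon :: "('n \<Rightarrow>\<^sub>0 nat) set \<Rightarrow> 'n mpoly set" where
  "span_mon A = {p. Poly_Mapping.keys p \<subseteq> A}"

definition interpolates :: "('n::finite) mpoly \<Rightarrow> 'n mpoly \<Rightarrow> ('n \<Rightarrow> complex) set \<Rightarrow> bool" where
  "interpolates p q X \<longleftrightarrow> (\<forall>x\<in>X. eval p x = eval q x)"

definition deg_reducing_interp_space :: "('n::finite) mpoly set \<Rightarrow> ('n \<Rightarrow> complex) set \<Rightarrow> bool" where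
  "deg_reducing_interp_space P X \<longleftrightarrow>
     (\<forall>q. \<exists>!p. p \<in> P \<and> interpolates p q X) \<and>
     (\<forall>q p. p \<in> P \<and> interpolates p q X \<longrightarrow> deg p \<le> deg q)"

definition interp_op :: "('n \<Rightarrow>\<^sub>0 nat) set \<Rightarrow> ('n::finite \<Rightarrow> complex) set \<Rightarrow> 'n mpoly \<Rightarrow> 'n mpoly" where
  "interp_op A X q = (THE p. p \<in> span_mon A \<and> interpolates p q X)"

definition border :: "('n \<Rightarrow>\<^sub>0 nat) set \<Rightarrow> ('n \<Rightarrow>\<^sub>0 nat) set" where
  "border A = (\<Union>j. (\<lambda>\<alpha>. \<alpha> + Poly_Mapping.single j 1) ` A) - A"

definition vanishing_ideal :: "('n::finite \<Rightarrow> complex) set \<Rightarrow> 'n mpoly set" where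
  "vanishing_ideal X = {p. \<forall>x\<in>X. eval p x = 0}"

definition is_H_basis :: "('n::finite) mpoly set \<Rightarrow> 'n mpoly set \<Rightarrow> bool" where
  "is_H_basis H I \<longleftrightarrow> finite H \<and> H \<subseteq> I \<and>
     (\<forall>q\<in>I. \<exists>g. q = (\<Sum>h\<in>H. g h * h) \<and>
        (\<forall>h\<in>H. g h \<noteq> 0 \<longrightarrow> deg (g h) + deg h \<le> deg q))"

end

theory Submission
  imports Defs
begin


definition monoev :: "('n::finite \<Rightarrow>\<^sub>0 nat) \<Rightarrow> ('n \<Rightarrow> complex) \<Rightarrow> complex" where
  "monoev a x = (\<Prod>i\<in>UNIV. x i ^ Poly_Mapping.lookup a i)"

lemma monoev_add: "monoev (a + b) x = monoev a x * monoev b x"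
  by (simp add: monoev_def lookup_add power_add prod.distrib)

lemma eval_alt: "eval p x = (\<Sum>a\<in>Poly_Mapping.keys p. Poly_Mapping.lookup p a * monoev a x)"
  by (simp add: eval_def monoev_def)

lemma eval_superset:
  assumes "finite K" "Poly_Mapping.keys p \<subseteq> K"
  shows "eval p x = (\<Sum>a\<in>K. Poly_Mapping.lookup p a * monoev a x)"
  unfolding eval_alt
  by (rule sum.mono_neutral_left) (use assms in \<open>auto simp: in_keys_iff\<close>)

lemma eval_add: "eval (p + q) x = eval p x + eval q x"
proof -
  let ?K = "Poly_Mapping.keys p \<union> Poly_Mapping.keys q"
  have "eval (p+q) x = (\<Sum>a\<in>?K. Poly_Mapping.lookup (p+q) a * monoev a x)"
    using keys_add[of p q] by (intro eval_superset) auto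
  also have "\<dots> = (\<Sum>a\<in>?K. Poly_Mapping.lookup p a * monoev a x) + (\<Sum>a\<in>?K. Poly_Mapping.lookup q a * monoev a x)"
    by (simp add: lookup_add distrib_right sum.distrib)
  also have "\<dots> = eval p x + eval q x"
    by (subst (1 2) eval_superset[where K="?K"]) auto
  finally show ?thesis .
qed

lemma eval_zero: "eval 0 x = 0" by (simp add: eval_def)

lemma eval_uminus: "eval (- p) x = - eval p x"
  by (simp add: eval_alt sum_negf)

lemma eval_diff: "eval (p - q) x = eval p x - eval q x"
  by (metis diff_conv_add_uminus eval_add eval_uminus)

lemma eval_sum: "eval (sum f S) x = (\<Sum>s\<in>S. eval (f s) x)"
  by (induction S rule: infinite_finite_induct) (auto simp: eval_zero eval_add)

lemma eval_single: "eval (Poly_Mapping.single a c) x = c * monoev a x"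
  by (simp add: eval_alt)

lemma pm_expand: "p = (\<Sum>a\<in>Poly_Mapping.keys p. Poly_Mapping.single a (Poly_Mapping.lookup p a))"
proof (rule poly_mapping_eqI)
  fix k
  show "Poly_Mapping.lookup p k = Poly_Mapping.lookup (\<Sum>a\<in>Poly_Mapping.keys p. Poly_Mapping.single a (Poly_Mapping.lookup p a)) k"
    by (auto simp: lookup_sum lookup_single when_def in_keys_iff)
qed

lemma eval_mult: "eval (p * q) x = eval p x * eval q x"
proof -
  have "p * q = (\<Sum>a\<in>Poly_Mapping.keys p. \<Sum>b\<in>Poly_Mapping.keys q.
      Poly_Mapping.single a (Poly_Mapping.lookup p a) * Poly_Mapping.single b (Poly_Mapping.lookup q b))"
  proof -
    have "p * q = (\<Sum>a\<in>Poly_Mapping.keys p. Poly_Mapping.single a (Poly_Mapping.lookup p a)) *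
       (\<Sum>b\<in>Poly_Mapping.keys q. Poly_Mapping.single b (Poly_Mapping.lookup q b))"
      using pm_expand[of p] pm_expand[of q] by simp
    then show ?thesis by (simp add: sum_distrib_left sum_distrib_right sum.swap[of _ "Poly_Mapping.keys q"])
  qed
  then have "eval (p*q) x = (\<Sum>a\<in>Poly_Mapping.keys p. \<Sum>b\<in>Poly_Mapping.keys q.
      Poly_Mapping.lookup p a * monoev a x * (Poly_Mapping.lookup q b * monoev b x))"
    by (simp add: eval_sum mult_single eval_single monoev_add mult_ac)
  also have "\<dots> = eval p x * eval q x"
    by (simp add: eval_alt sum_product)
  finally show ?thesis .
qed

lemma mdeg_add: "mdeg (a + b) = mdeg a + mdeg b"
  by (simp add: mdeg_def lookup_add sum.distrib)

lemma mdeg_e: "mdeg (Poly_Mapping.single (j::'n::finite) 1) = 1"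
  by (simp add: mdeg_def lookup_single when_def)

lemma mdeg_e' [simp]: "mdeg (Poly_Mapping.single (j::'n::finite) (Suc 0)) = Suc 0"
  using mdeg_e[of j] by simp

lemma mdeg_0_iff: "mdeg (a::'n::finite \<Rightarrow>\<^sub>0 nat) = 0 \<longleftrightarrow> a = 0"
proof
  assume "mdeg a = 0"
  then have "\<forall>i. Poly_Mapping.lookup a i = 0" by (simp add: mdeg_def)
  then show "a = 0" by (intro poly_mapping_eqI) simp
qed (simp add: mdeg_def)

lemma deg_ge: "deg p \<ge> -1"
  by (simp add: deg_def)

lemma deg_key: "a \<in> Poly_Mapping.keys p \<Longrightarrow> int (mdeg a) \<le> deg p"
  by (auto simp: deg_def)

lemma deg_le: "(\<And>a. a \<in> Poly_Mapping.keys p \<Longrightarrow> int (mdeg a) \<le> m) \<Longrightarrow> m \<ge> -1 \<Longrightarrow> deg p \<le> m"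
proof (cases "p = 0")
  case False
  assume h: "\<And>a. a \<in> Poly_Mapping.keys p \<Longrightarrow> int (mdeg a) \<le> m"
  have ne: "Poly_Mapping.keys p \<noteq> {}" using False by simp
  obtain a where a: "a \<in> Poly_Mapping.keys p" "Max (mdeg ` Poly_Mapping.keys p) = mdeg a"
  proof -
    have "Max (mdeg ` Poly_Mapping.keys p) \<in> mdeg ` Poly_Mapping.keys p"
      using ne by (intro Max_in) auto
    then show ?thesis using that by blast
  qed
  show ?thesis using False a h[OF a(1)] by (simp add: deg_def)
qed (simp add: deg_def)

lemma deg_mono_keys: "Poly_Mapping.keys p \<subseteq> Poly_Mapping.keys q \<Longrightarrow> deg p \<le> deg q"
  by (rule deg_le) (auto intro: deg_key deg_ge)

lemma deg_add_le: "deg p \<le> m \<Longrightarrow> deg q \<le> m \<Longrightarrow> deg (p + q) \<le> m"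
proof (rule deg_le)
  fix a assume "deg p \<le> m" "deg q \<le> m" "a \<in> Poly_Mapping.keys (p + q)"
  then show "int (mdeg a) \<le> m" using keys_add[of p q] deg_key[of a p] deg_key[of a q] by auto
next
  assume "deg p \<le> m" then show "m \<ge> -1" using deg_ge[of p] by simp
qed

lemma deg_mult_le:
  assumes "p \<noteq> 0" "q \<noteq> 0"
  shows "deg (p * q) \<le> deg p + deg q"
proof (rule deg_le)
  fix c assume "c \<in> Poly_Mapping.keys (p * q)"
  then obtain a b where "c = a + b" "a \<in> Poly_Mapping.keys p" "b \<in> Poly_Mapping.keys q"
    using keys_mult[of p q] by auto
  then show "int (mdeg c) \<le> deg p + deg q"
    using deg_key[of a p] deg_key[of b q] by (simp add: mdeg_add)
next
  show "-1 \<le> deg p + deg q" using assms by (simp add: deg_def)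
qed

lemma deg_monom: "deg (monom a) = int (mdeg a)"
  by (simp add: deg_def monom_def) (metis empty_not_insert keys_single keys_zero one_neq_zero)

lemma deg_const: "deg (Poly_Mapping.single 0 c) \<le> 0"
  by (rule deg_le) (auto simp: mdeg_def split: if_splits)

lemma deg_one: "deg (1::'n::finite mpoly) = 0"
  by (simp add: deg_def mdeg_def)

lemma eval_one: "eval 1 x = 1"
  by (simp add: eval_alt monoev_def)



locale setting =
  fixes X :: "('n::finite \<Rightarrow> complex) set" and A :: "('n \<Rightarrow>\<^sub>0 nat) set"
  assumes fX: "finite X" and neX: "X \<noteq> {}" and fA: "finite A"
    and dr: "deg_reducing_interp_space (span_mon A) X"
begin

abbreviation "L \<equiv> interp_op A X"
definition hq where "hq \<alpha> = monom \<alpha> - L (monom \<alpha>)"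
definition H where "H = hq ` border A"

lemma L_prop: "L q \<in> span_mon A \<and> interpolates (L q) q X"
proof -
  have "\<exists>!p. p \<in> span_mon A \<and> interpolates p q X" using dr by (simp add: deg_reducing_interp_space_def)
  then show ?thesis unfolding interp_op_def by (rule theI')
qed

lemma L_deg: "deg (L q) \<le> deg q"
  using dr L_prop[of q] by (simp add: deg_reducing_interp_space_def)

lemma uniq0: "p \<in> span_mon A \<Longrightarrow> (\<forall>x\<in>X. eval p x = 0) \<Longrightarrow> p = 0"
proof -
  assume p: "p \<in> span_mon A" "\<forall>x\<in>X. eval p x = 0"
  have "\<exists>!p. p \<in> span_mon A \<and> interpolates p 0 X" using dr by (simp add: deg_reducing_interp_space_def)
  moreover have "0 \<in> span_mon A \<and> interpolates 0 0 X" by (simp add: span_mon_def interpolates_def)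
  moreover have "p \<in> span_mon A \<and> interpolates p 0 X" using p by (simp add: interpolates_def eval_zero)
  ultimately show "p = 0" by blast
qed

lemma hq_deg: "deg (hq \<alpha>) \<le> int (mdeg \<alpha>)"
  unfolding hq_def diff_conv_add_uminus
  by (rule deg_add_le) (use L_deg[of "monom \<alpha>"] deg_mono_keys[of "- L (monom \<alpha>)" "L (monom \<alpha>)"] in \<open>auto simp: deg_monom\<close>)

lemma hq_van: "hq \<alpha> \<in> vanishing_ideal X"
  using L_prop[of "monom \<alpha>"] by (simp add: hq_def vanishing_ideal_def eval_diff interpolates_def)

lemma finite_border: "finite (border A)"
  using fA by (simp add: border_def)

lemma finite_H: "finite H"
  using finite_border by (simp add: H_def)

definition S where "S k = {p. \<exists>g r. p = (\<Sum>h\<in>H. g h * h) + r \<and> r \<in> span_mon A \<and> deg r \<le> int k \<and>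
   (\<forall>h\<in>H. g h \<noteq> 0 \<longrightarrow> deg (g h) + deg h \<le> int k)}"

lemma S_I: "p = (\<Sum>h\<in>H. g h * h) + r \<Longrightarrow> r \<in> span_mon A \<Longrightarrow> deg r \<le> int k \<Longrightarrow>
   (\<forall>h\<in>H. g h \<noteq> 0 \<longrightarrow> deg (g h) + deg h \<le> int k) \<Longrightarrow> p \<in> S k"
  unfolding S_def by blast

lemma S_mono: "p \<in> S k \<Longrightarrow> k \<le> m \<Longrightarrow> p \<in> S m"
  unfolding S_def by (smt (verit) mem_Collect_eq of_nat_le_iff order_trans)

lemma S_zero: "0 \<in> S k"
  unfolding S_def by (rule CollectI, rule exI[of _ "\<lambda>_. 0"], rule exI[of _ 0]) (simp add: span_mon_def deg_def)

lemma S_add: "p \<in> S k \<Longrightarrow> q \<in> S k \<Longrightarrow> p + q \<in> S k"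
proof -
  assume "p \<in> S k" "q \<in> S k"
  then obtain g1 r1 g2 r2 where 1: "p = (\<Sum>h\<in>H. g1 h * h) + r1" "r1 \<in> span_mon A" "deg r1 \<le> int k"
     "\<forall>h\<in>H. g1 h \<noteq> 0 \<longrightarrow> deg (g1 h) + deg h \<le> int k"
   and 2: "q = (\<Sum>h\<in>H. g2 h * h) + r2" "r2 \<in> span_mon A" "deg r2 \<le> int k"
     "\<forall>h\<in>H. g2 h \<noteq> 0 \<longrightarrow> deg (g2 h) + deg h \<le> int k"
    unfolding S_def by blast
  have "p + q = (\<Sum>h\<in>H. (g1 h + g2 h) * h) + (r1 + r2)"
    using 1 2 by (simp add: distrib_right sum.distrib)
  moreover have "r1 + r2 \<in> span_mon A" using 1 2 keys_add[of r1 r2] by (auto simp: span_mon_def)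
  moreover have "deg (r1 + r2) \<le> int k" using 1 2 by (intro deg_add_le)
  moreover have "\<forall>h\<in>H. g1 h + g2 h \<noteq> 0 \<longrightarrow> deg (g1 h + g2 h) + deg h \<le> int k"
  proof (intro ballI impI)
    fix h assume h: "h \<in> H" "g1 h + g2 h \<noteq> 0"
    show "deg (g1 h + g2 h) + deg h \<le> int k"
    proof (cases "g1 h = 0 \<or> g2 h = 0")
      case True then show ?thesis using 1 2 h by auto
    next
      case False
      then have "deg (g1 h + g2 h) \<le> int k - deg h" using 1 2 h by (intro deg_add_le) auto
      then show ?thesis by simp
    qed
  qed
  ultimately show ?thesis by (rule S_I)
qed

lemma S_sum: "finite I \<Longrightarrow> (\<And>i. i \<in> I \<Longrightarrow> f i \<in> S k) \<Longrightarrow> sum f I \<in> S k"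
  by (induction I rule: finite_induct) (auto intro: S_zero S_add)

lemma S_const: "p \<in> S k \<Longrightarrow> Poly_Mapping.single 0 c * p \<in> S k"
proof -
  assume "p \<in> S k"
  then obtain g r where 1: "p = (\<Sum>h\<in>H. g h * h) + r" "r \<in> span_mon A" "deg r \<le> int k"
     "\<forall>h\<in>H. g h \<noteq> 0 \<longrightarrow> deg (g h) + deg h \<le> int k"
    unfolding S_def by blast
  let ?c = "Poly_Mapping.single 0 c"
  have kc: "Poly_Mapping.keys (?c * f) \<subseteq> Poly_Mapping.keys f" for f
    using keys_mult[of ?c f] by (auto split: if_splits)
  have "?c * p = (\<Sum>h\<in>H. (?c * g h) * h) + ?c * r"
    using 1 by (simp add: distrib_left sum_distrib_left mult.assoc)
  moreover have "?c * r \<in> span_mon A" using 1 kc[of r] by (auto simp: span_mon_def)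
  moreover have "deg (?c * r) \<le> int k" using 1 deg_mono_keys[OF kc[of r]] by simp
  moreover have "\<forall>h\<in>H. ?c * g h \<noteq> 0 \<longrightarrow> deg (?c * g h) + deg h \<le> int k"
  proof (intro ballI impI)
    fix h assume h: "h \<in> H" "?c * g h \<noteq> 0"
    then have "g h \<noteq> 0" by auto
    then show "deg (?c * g h) + deg h \<le> int k"
      using 1 h deg_mono_keys[OF kc[of "g h"]] by force
  qed
  ultimately show ?thesis by (rule S_I)
qed


lemma monom_S: "monom \<beta> \<in> S k" if "\<beta> \<in> border A" "mdeg \<beta> \<le> k"
proof -
  have hH: "hq \<beta> \<in> H" using that by (simp add: H_def)
  have "monom \<beta> = (\<Sum>h\<in>H. (if h = hq \<beta> then 1 else 0) * h) + L (monom \<beta>)"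
  proof -
    have "(\<Sum>h\<in>H. (if h = hq \<beta> then 1 else 0) * h) = (\<Sum>h\<in>H. if h = hq \<beta> then hq \<beta> else 0)"
      by (rule sum.cong) auto
    also have "\<dots> = hq \<beta>" using hH finite_H by simp
    finally show ?thesis by (simp add: hq_def)
  qed
  moreover have "L (monom \<beta>) \<in> span_mon A" using L_prop by blast
  moreover have "deg (L (monom \<beta>)) \<le> int k" using L_deg[of "monom \<beta>"] that by (simp add: deg_monom)
  moreover have "\<forall>h\<in>H. (if h = hq \<beta> then 1 else 0) \<noteq> 0 \<longrightarrow> deg (if h = hq \<beta> then 1 else 0) + deg h \<le> int k"
    using hq_deg[of \<beta>] that by (auto simp: deg_one)
  ultimately show ?thesis by (rule S_I)
qed

lemma single_step:
  assumes "\<gamma> \<in> A" "mdeg \<gamma> \<le> k"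
  shows "Poly_Mapping.single (Poly_Mapping.single j 1 + \<gamma>) c \<in> S (Suc k)"
proof -
  let ?b = "Poly_Mapping.single j 1 + \<gamma>"
  have mb: "mdeg ?b \<le> Suc k" using assms by (simp add: mdeg_add mdeg_e)
  show ?thesis
  proof (cases "?b \<in> A")
    case True
    have "Poly_Mapping.single ?b c = (\<Sum>h\<in>H. 0 * h) + Poly_Mapping.single ?b c" by simp
    moreover have "Poly_Mapping.single ?b c \<in> span_mon A" using True by (simp add: span_mon_def)
    moreover have "deg (Poly_Mapping.single ?b c) \<le> int (Suc k)"
      using mb by (intro deg_le) (auto split: if_splits)
    ultimately show ?thesis by (rule S_I) simp
  next
    case False
    then have "?b \<in> border A" using assms(1) unfolding border_def by (auto simp: add.commute)
    then have "monom ?b \<in> S (Suc k)" using mb by (rule monom_S)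
    then have "Poly_Mapping.single 0 c * monom ?b \<in> S (Suc k)" by (rule S_const)
    then show ?thesis by (simp add: monom_def mult_single)
  qed
qed

lemma S_x: "p \<in> S k \<Longrightarrow> monom (Poly_Mapping.single j 1) * p \<in> S (Suc k)"
proof -
  assume "p \<in> S k"
  then obtain g r where 1: "p = (\<Sum>h\<in>H. g h * h) + r" "r \<in> span_mon A" "deg r \<le> int k"
     "\<forall>h\<in>H. g h \<noteq> 0 \<longrightarrow> deg (g h) + deg h \<le> int k"
    unfolding S_def by blast
  let ?x = "monom (Poly_Mapping.single j 1) :: 'n mpoly"
  have dx: "deg ?x = 1" by (simp add: deg_monom mdeg_e)
  have eq: "?x * p = ((\<Sum>h\<in>H. (?x * g h) * h) + 0) + ?x * r"
    using 1 by (simp add: distrib_left sum_distrib_left mult.assoc)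
  have "(\<Sum>h\<in>H. (?x * g h) * h) + 0 \<in> S (Suc k)"
  proof (rule S_I)
    show "\<forall>h\<in>H. ?x * g h \<noteq> 0 \<longrightarrow> deg (?x * g h) + deg h \<le> int (Suc k)"
    proof (intro ballI impI)
      fix h assume h: "h \<in> H" "?x * g h \<noteq> 0"
      then have ne: "g h \<noteq> 0" "?x \<noteq> 0" by auto
      show "deg (?x * g h) + deg h \<le> int (Suc k)"
        using deg_mult_le[OF ne(2,1)] dx 1(4) h ne by force
    qed
  qed (auto simp: span_mon_def deg_def)
  moreover have "?x * r \<in> S (Suc k)"
  proof -
    have "?x * r = (\<Sum>a\<in>Poly_Mapping.keys r. ?x * Poly_Mapping.single a (Poly_Mapping.lookup r a))"
      by (subst pm_expand) (simp add: sum_distrib_left)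
    also have "\<dots> = (\<Sum>a\<in>Poly_Mapping.keys r. Poly_Mapping.single (Poly_Mapping.single j 1 + a) (Poly_Mapping.lookup r a))"
      by (simp add: monom_def mult_single)
    also have "\<dots> \<in> S (Suc k)"
    proof (rule S_sum)
      fix a assume a: "a \<in> Poly_Mapping.keys r"
      then have "a \<in> A" using 1 by (auto simp: span_mon_def)
      moreover have "mdeg a \<le> k" using deg_key[OF a] 1(3) by simp
      ultimately show "Poly_Mapping.single (Poly_Mapping.single j 1 + a) (Poly_Mapping.lookup r a) \<in> S (Suc k)"
        by (rule single_step)
    qed simp
    finally show ?thesis .
  qed
  ultimately show ?thesis unfolding eq by (rule S_add)
qed

lemma L_one: "L 1 = 1"
proof -
  have dk: "a \<in> Poly_Mapping.keys (L 1) \<Longrightarrow> a = 0" for a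
  proof -
    assume a: "a \<in> Poly_Mapping.keys (L 1)"
    have "int (mdeg a) \<le> 0" using deg_key[OF a] L_deg[of 1] by (simp add: deg_one)
    then show "a = 0" by (simp add: mdeg_0_iff)
  qed
  define c where "c = Poly_Mapping.lookup (L 1) 0"
  have e: "L 1 = Poly_Mapping.single 0 c"
  proof (rule poly_mapping_eqI)
    fix k show "Poly_Mapping.lookup (L 1) k = Poly_Mapping.lookup (Poly_Mapping.single 0 c) k"
      using dk[of k] by (cases "k = 0") (auto simp: c_def lookup_single in_keys_iff)
  qed
  obtain x where "x \<in> X" using neX by auto
  then have "eval (L 1) x = 1" using L_prop[of 1] by (simp add: interpolates_def eval_one)
  then have "c = 1" using e by (simp add: eval_single monoev_def)
  then show ?thesis using e by simp
qed

lemma S_one: "1 \<in> S 0"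
proof (rule S_I[where g="\<lambda>_. 0" and r=1])
  show "1 \<in> span_mon A" using L_prop[of 1] by (simp add: L_one)
qed (auto simp: deg_one)

lemma S_monom: "mdeg a = n \<Longrightarrow> monom a \<in> S n"
proof (induction n arbitrary: a)
  case 0
  then have "a = 0" by (simp add: mdeg_0_iff)
  then show ?case using S_one by (simp add: monom_def)
next
  case (Suc n)
  then have "a \<noteq> 0" by (auto simp: mdeg_def)
  then obtain j where j: "Poly_Mapping.lookup a j \<noteq> 0"
    by (metis poly_mapping_eqI lookup_zero)
  define a' where "a' = a - Poly_Mapping.single j 1"
  have aa: "a = Poly_Mapping.single j 1 + a'"
    by (rule poly_mapping_eqI) (use j in \<open>auto simp: a'_def lookup_add lookup_minus lookup_single when_def\<close>)
  then have "mdeg a' = n" using Suc.prems by (simp add: mdeg_add mdeg_e)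
  then have "monom a' \<in> S n" by (rule Suc.IH)
  then have "monom (Poly_Mapping.single j 1) * monom a' \<in> S (Suc n)" by (rule S_x)
  then show ?case using aa by (simp add: monom_def mult_single)
qed

lemma S_all: "q \<noteq> 0 \<Longrightarrow> q \<in> S (nat (deg q))"
proof -
  assume q: "q \<noteq> 0"
  have "(\<Sum>a\<in>Poly_Mapping.keys q. Poly_Mapping.single a (Poly_Mapping.lookup q a)) \<in> S (nat (deg q))"
  proof (rule S_sum)
    fix a assume a: "a \<in> Poly_Mapping.keys q"
    have "Poly_Mapping.single 0 (Poly_Mapping.lookup q a) * monom a \<in> S (mdeg a)"
      by (rule S_const, rule S_monom) simp
    then have "Poly_Mapping.single a (Poly_Mapping.lookup q a) \<in> S (mdeg a)"
      by (simp add: monom_def mult_single)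
    then show "Poly_Mapping.single a (Poly_Mapping.lookup q a) \<in> S (nat (deg q))"
      by (rule S_mono) (use deg_key[OF a] in arith)
  qed simp
  then show ?thesis using pm_expand[of q] by simp
qed

theorem main: "is_H_basis H (vanishing_ideal X)"
  unfolding is_H_basis_def
proof (intro conjI ballI)
  show "finite H" by (rule finite_H)
  show "H \<subseteq> vanishing_ideal X" using hq_van by (auto simp: H_def)
  fix q assume qI: "q \<in> vanishing_ideal X"
  show "\<exists>g. q = (\<Sum>h\<in>H. g h * h) \<and> (\<forall>h\<in>H. g h \<noteq> 0 \<longrightarrow> deg (g h) + deg h \<le> deg q)"
  proof (cases "q = 0")
    case True then show ?thesis by (intro exI[of _ "\<lambda>_. 0"]) simp
  next
    case False
    then have "q \<in> S (nat (deg q))" by (rule S_all)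
    then obtain g r where 1: "q = (\<Sum>h\<in>H. g h * h) + r" "r \<in> span_mon A"
     "\<forall>h\<in>H. g h \<noteq> 0 \<longrightarrow> deg (g h) + deg h \<le> int (nat (deg q))"
      unfolding S_def by blast
    have hv: "eval h x = 0" if "h \<in> H" "x \<in> X" for h x
      using hq_van that by (auto simp: H_def vanishing_ideal_def)
    have "\<forall>x\<in>X. eval r x = 0"
    proof
      fix x assume x: "x \<in> X"
      have "eval r x = eval q x - eval (\<Sum>h\<in>H. g h * h) x" using 1(1) by (simp add: eval_add)
      also have "\<dots> = 0" using qI x hv by (simp add: vanishing_ideal_def eval_sum eval_mult)
      finally show "eval r x = 0" .
    qed
    then have "r = 0" using 1(2) uniq0 by blast
    moreover have "int (nat (deg q)) = deg q" using False by (simp add: deg_def)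
    ultimately show ?thesis using 1 by auto
  qed
qed

end

theorem lemma36:
  fixes X :: "('n::finite \<Rightarrow> complex) set" and A :: "('n \<Rightarrow>\<^sub>0 nat) set"
  assumes "finite X" and "X \<noteq> {}" and "finite A"
    and "deg_reducing_interp_space (span_mon A) X"
  shows "is_H_basis ((\<lambda>\<alpha>. monom \<alpha> - interp_op A X (monom \<alpha>)) ` border A) (vanishing_ideal X)"
proof -
  interpret setting X A using assms by unfold_locales
  show ?thesis using main by (simp add: H_def hq_def)
qed

end
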